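(* For every $\delta>0$ there exists $N_0$ such that for all $N\ge N_0$, all $\mathscr P\subseteq\{1,\dots,N-1\}$ and all $g\in C([0,1];\mathbb R)$, $$\gamma^{\mathbf 0}_{[-1,N+1]\setminus\mathscr P}\big(\|h_N-g\|_\infty<\delta\big)\le\exp\Big(-N\inf_h\mathscr E_N(h)\Big),$$ where the infimum is over all $h:\{-\frac1N,0,\frac1N,\dots,1,1+\frac1N\}\to\mathbb R$ with $\max_{0\le j\le N}|h(j/N)-g(j/N)|\le2\delta$.
   Context: $\mathcal H_{[-1,N+1]}(\phi)=\sum_{k=0}^{N}\frac12(\phi_{k+1}+\phi_{k-1}-2\phi_k)^2$. $\gamma^{\mathbf 0}_{[-1,N+1]\setminus\mathscr P}$ is the centred Gaussian probability measure on $\phi:\{-1,\dots,N+1\}\to\mathbb R$ proportional to $e^{-\mathcal H_{[-1,N+1]}(\phi)}\prod_{k\in\{1,\dots,N-1\}\setminus\mathscr P}d\phi_k\prod_{k\in\mathscr P\cup\{-1,0,N,N+1\}}\delta_0(d\phi_k)$. $h_N$ is the linear interpolation on $[0,1]$ of $h_N(k/N)=\phi_k/N^2$; $\|\cdot\|_\infty$ is the sup norm on $[0,1]$. $\mathscr E_N(h)=\frac12\sum_{j=0}^N\frac1N N^4\big(h(\frac{j+1}N)+h(\frac{j-1}N)-2h(\frac jN)\big)^2$, so that $\mathcal H_{[-1,N+1]}(\phi)=N\mathscr E_N(h_N)$. *)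

theory Defs
  imports "HOL-Analysis.Analysis"
begin

text \<open>Configurations are functions phi :: int => real; only indices -1..N+1 matter.\<close>

definition hamiltonian :: "nat \<Rightarrow> (int \<Rightarrow> real) \<Rightarrow> real" where
  "hamiltonian N phi =
     (\<Sum>k\<in>{0..int N}. (1/2) * (phi (k+1) + phi (k-1) - 2 * phi k)^2)"

definition free_sites :: "nat \<Rightarrow> int set \<Rightarrow> int set" where
  "free_sites N P = {1..int N - 1} - P"

definition extend_zero :: "nat \<Rightarrow> int set \<Rightarrow> (int \<Rightarrow> real) \<Rightarrow> (int \<Rightarrow> real)" where
  "extend_zero N P x = (\<lambda>k. if k \<in> free_sites N P then x k else 0)"

text \<open>Probability of an event A under the pinned centred Gaussian measure
  gamma^0_{[-1,N+1]\P}: density exp(-H) w.r.t. Lebesgue measure on the free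
  coordinates, Dirac at 0 on the others, normalised.\<close>
definition gamma_prob :: "nat \<Rightarrow> int set \<Rightarrow> ((int \<Rightarrow> real) \<Rightarrow> bool) \<Rightarrow> ennreal" where
  "gamma_prob N P A =
     (\<integral>\<^sup>+ x. indicator {x. A (extend_zero N P x)} x
               * ennreal (exp (- hamiltonian N (extend_zero N P x)))
        \<partial>(PiM (free_sites N P) (\<lambda>_. lborel)))
   / (\<integral>\<^sup>+ x. ennreal (exp (- hamiltonian N (extend_zero N P x)))
        \<partial>(PiM (free_sites N P) (\<lambda>_. lborel)))"

definition lin_interp :: "nat \<Rightarrow> (int \<Rightarrow> real) \<Rightarrow> real \<Rightarrow> real" where
  "lin_interp N v t =
     (let k = min \<lfloor>real N * t\<rfloor> (int N - 1); l = real N * t - real_of_int k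
      in (1 - l) * v k + l * v (k + 1))"

definition hN :: "nat \<Rightarrow> (int \<Rightarrow> real) \<Rightarrow> real \<Rightarrow> real" where
  "hN N phi = lin_interp N (\<lambda>k. phi k / (real N)^2)"

definition sup_norm01 :: "(real \<Rightarrow> real) \<Rightarrow> real" where
  "sup_norm01 f = (SUP t\<in>{0..1}. \<bar>f t\<bar>)"

text \<open>Discrete energy E_N(h), with h represented by j \<mapsto> h(j/N), j = -1..N+1.\<close>
definition energy_N :: "nat \<Rightarrow> (int \<Rightarrow> real) \<Rightarrow> real" where
  "energy_N N h =
     (1/2) * (\<Sum>j\<in>{0..int N}. (1 / real N) * (real N)^4 * (h (j+1) + h (j-1) - 2 * h j)^2)"

end

theory Submission
  imports Defs
begin


definition D2 :: "(int \<Rightarrow> real) \<Rightarrow> int \<Rightarrow> real" where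
  "D2 u k = u (k+1) + u (k-1) - 2 * u k"

lemma ham_D2: "hamiltonian N u = (\<Sum>k\<in>{0..int N}. (1/2) * (D2 u k)^2)"
  by (simp add: hamiltonian_def D2_def)

lemma ham_nonneg: "hamiltonian N u \<ge> 0"
  unfolding ham_D2 by (intro sum_nonneg) auto

lemma D2_add: "D2 (\<lambda>k. u k + v k) k = D2 u k + D2 v k"
  by (simp add: D2_def algebra_simps)

lemma D2_scale: "D2 (\<lambda>k. t * u k) k = t * D2 u k"
  by (simp add: D2_def algebra_simps)

lemma ham_add: "hamiltonian N (\<lambda>k. u k + v k) =
   hamiltonian N u + hamiltonian N v + (\<Sum>k\<in>{0..int N}. D2 u k * D2 v k)"
  unfolding ham_D2 D2_add
  by (simp add: power2_eq_square algebra_simps sum.distrib sum_distrib_left)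

lemma ham_scale: "hamiltonian N (\<lambda>k. t * u k) = t^2 * hamiltonian N u"
  unfolding ham_D2 D2_scale
  by (simp add: power_mult_distrib sum_distrib_left algebra_simps)

lemma small_t:
  fixes b h :: real
  assumes "h \<ge> 0" "\<And>t. 0 < t \<Longrightarrow> t \<le> 1 \<Longrightarrow> t * h + b \<ge> 0"
  shows "b \<ge> 0"
proof (rule ccontr)
  assume "\<not> b \<ge> 0"
  define t where "t = min 1 (-b/(2*(h+1)))"
  have "-b/(2*(h+1)) > 0" using \<open>\<not> b \<ge> 0\<close> assms(1) by (intro divide_pos_pos) auto
  hence t: "0 < t" "t \<le> 1" by (auto simp: t_def)
  have "t \<le> -b/(2*(h+1))" by (simp add: t_def)
  hence "t * (2*(h+1)) \<le> -b" using assms(1) by (metis le_divide_eq minus_divide_left mult.commute le_less_trans[of 0 "h+1"] zero_less_mult_iff add_nonneg_pos zero_less_one zero_less_numeral)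
  hence "t*h*2 + 2*t \<le> -b" by (simp add: algebra_simps)
  hence "t * h + b < 0" using t \<open>\<not> b \<ge> 0\<close> by linarith
  with assms(2)[OF t] show False by simp
qed

lemma minimizer_ineq:
  assumes cS: "c \<in> S" and phiS: "phi \<in> S"
    and conv: "\<And>t. 0 \<le> t \<Longrightarrow> t \<le> 1 \<Longrightarrow> (\<lambda>k. c k + t * (phi k - c k)) \<in> S"
    and min: "\<And>psi. psi \<in> S \<Longrightarrow> hamiltonian N c \<le> hamiltonian N psi"
  shows "hamiltonian N phi \<ge> hamiltonian N c + hamiltonian N (\<lambda>k. phi k - c k)"
proof -
  define b where "b = (\<Sum>k\<in>{0..int N}. D2 c k * D2 (\<lambda>k. phi k - c k) k)"
  define h where "h = hamiltonian N (\<lambda>k. phi k - c k)"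
  have "t * h + b \<ge> 0" if "0 < t" "t \<le> 1" for t
  proof -
    have "hamiltonian N c \<le> hamiltonian N (\<lambda>k. c k + t * (phi k - c k))"
      using min conv that by auto
    also have "\<dots> = hamiltonian N c + t^2 * h + t * b"
      unfolding ham_add ham_scale D2_scale h_def b_def
      by (simp add: sum_distrib_left algebra_simps)
    finally have "0 \<le> t * (t * h + b)" by (simp add: power2_eq_square algebra_simps)
    thus ?thesis using that by (simp add: zero_le_mult_iff)
  qed
  hence "b \<ge> 0" using small_t[of h b] ham_nonneg h_def by blast
  have "hamiltonian N phi = hamiltonian N (\<lambda>k. c k + (phi k - c k))" by simp
  also have "\<dots> = hamiltonian N c + h + b" unfolding ham_add h_def b_def ..
  finally show ?thesis using \<open>b \<ge> 0\<close> h_def by simp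
qed



interpretation lb_prod: product_sigma_finite "\<lambda>_::int. lborel"
  by standard

lemma distr_PiM_shift:
  fixes F :: "int set" and c :: "int \<Rightarrow> real"
  assumes fin: "finite F"
  shows "distr (PiM F (\<lambda>_. lborel)) (PiM F (\<lambda>_. lborel)) (\<lambda>x. \<lambda>i\<in>F. x i - c i)
         = PiM F (\<lambda>_. lborel)"
proof (rule lb_prod.PiM_eqI[OF fin])
  show "sets (distr (PiM F (\<lambda>_. lborel)) (PiM F (\<lambda>_. lborel)) (\<lambda>x. \<lambda>i\<in>F. x i - c i)) = sets (PiM F (\<lambda>_. lborel))"
    by simp
  fix A :: "int \<Rightarrow> real set" assume A: "\<And>i. i \<in> F \<Longrightarrow> A i \<in> sets lborel"
  have meas: "(\<lambda>x. \<lambda>i\<in>F. x i - c i) \<in> measurable (PiM F (\<lambda>_. lborel)) (PiM F (\<lambda>_. lborel))"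
    by measurable
  have AS: "PiE F A \<in> sets (PiM F (\<lambda>_. lborel))"
    using A by (intro sets_PiM_I_finite fin) auto
  have pre: "(\<lambda>x. \<lambda>i\<in>F. x i - c i) -` PiE F A \<inter> space (PiM F (\<lambda>_. lborel))
      = PiE F (\<lambda>i. ((+) (- c i)) -` A i)"
    by (auto simp: space_PiM PiE_iff)
  have one: "emeasure lborel (((+) (- c i)) -` A i) = emeasure lborel (A i)" if "i \<in> F" for i
  proof -
    have "emeasure lborel (A i) = emeasure (distr lborel borel ((+) (- c i))) (A i)"
      by (simp add: lborel_distr_plus)
    also have "\<dots> = emeasure lborel (((+) (- c i)) -` A i)"
      using A[OF that] by (subst emeasure_distr) auto
    finally show ?thesis by simp
  qed
  have "emeasure (distr (PiM F (\<lambda>_. lborel)) (PiM F (\<lambda>_. lborel)) (\<lambda>x. \<lambda>i\<in>F. x i - c i)) (PiE F A)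
      = emeasure (PiM F (\<lambda>_. lborel)) (PiE F (\<lambda>i. ((+) (- c i)) -` A i))"
    using meas AS by (simp add: emeasure_distr pre)
  also have "\<dots> = (\<Prod>i\<in>F. emeasure lborel (((+) (- c i)) -` A i))"
  proof (intro lb_prod.emeasure_PiM fin)
    fix i assume "i \<in> F"
    have "(+) (- c i) \<in> borel_measurable borel" by measurable
    from measurable_sets[OF this, of "A i"] A[OF \<open>i \<in> F\<close>]
    show "(+) (- c i) -` A i \<in> sets lborel" by simp
  qed
  also have "\<dots> = (\<Prod>i\<in>F. emeasure lborel (A i))"
    using one by (intro prod.cong) auto
  finally show "emeasure (distr (PiM F (\<lambda>_. lborel)) (PiM F (\<lambda>_. lborel)) (\<lambda>x. \<lambda>i\<in>F. x i - c i)) (PiE F A)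
      = (\<Prod>i\<in>F. emeasure lborel (A i))" .
qed

lemma nn_integral_PiM_shift:
  fixes F :: "int set" and c :: "int \<Rightarrow> real"
  assumes fin: "finite F" and f: "f \<in> borel_measurable (PiM F (\<lambda>_. lborel))"
  shows "(\<integral>\<^sup>+x. f (\<lambda>i\<in>F. x i - c i) \<partial>PiM F (\<lambda>_. lborel)) = (\<integral>\<^sup>+x. f x \<partial>PiM F (\<lambda>_. lborel))"
proof -
  have meas: "(\<lambda>x. \<lambda>i\<in>F. x i - c i) \<in> measurable (PiM F (\<lambda>_. lborel)) (PiM F (\<lambda>_. lborel))"
    by measurable
  have "(\<integral>\<^sup>+x. f x \<partial>PiM F (\<lambda>_. lborel)) = (\<integral>\<^sup>+x. f x \<partial>distr (PiM F (\<lambda>_. lborel)) (PiM F (\<lambda>_. lborel)) (\<lambda>x. \<lambda>i\<in>F. x i - c i))"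
    by (simp add: distr_PiM_shift[OF fin])
  also have "\<dots> = (\<integral>\<^sup>+x. f (\<lambda>i\<in>F. x i - c i) \<partial>PiM F (\<lambda>_. lborel))"
    using meas f by (intro nn_integral_distr) auto
  finally show ?thesis by simp
qed



lemma lin_interp_grid:
  assumes N: "N \<ge> 1" and j: "j \<in> {0..int N}"
  shows "lin_interp N v (real_of_int j / real N) = v j"
proof -
  have e: "real N * (real_of_int j / real N) = real_of_int j" using N by simp
  show ?thesis
  proof (cases "j = int N")
    case True
    then show ?thesis using N unfolding lin_interp_def e Let_def by (simp add: min_def)
  next
    case False
    then have "min j (int N - 1) = j" using j by auto
    then show ?thesis unfolding lin_interp_def e Let_def by simp
  qed
qed

lemma lin_interp_bound:
  assumes N: "N \<ge> 1" and t: "t \<in> {0..1}"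
  shows "\<bar>lin_interp N v t\<bar> \<le> 2 * (\<Sum>i\<in>{0..int N}. \<bar>v i\<bar>)"
proof -
  define x where "x = real N * t"
  define k where "k = min \<lfloor>x\<rfloor> (int N - 1)"
  define l where "l = x - real_of_int k"
  have x: "0 \<le> x" "x \<le> real N" using t N by (auto simp: x_def mult_le_cancel_left1)
  have k: "0 \<le> k" "k \<le> int N - 1" using x N by (auto simp: k_def)
  have l: "0 \<le> l \<and> l \<le> 1"
  proof (cases "\<lfloor>x\<rfloor> \<le> int N - 1")
    case True
    then have "k = \<lfloor>x\<rfloor>" by (simp add: k_def)
    then show ?thesis unfolding l_def by linarith
  next
    case False
    then have "k = int N - 1" by (simp add: k_def)
    moreover have "x \<ge> real N" using False by linarith
    ultimately show ?thesis unfolding l_def using x by auto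
  qed
  have "lin_interp N v t = (1 - l) * v k + l * v (k + 1)"
    unfolding lin_interp_def Let_def k_def l_def x_def by simp
  also have "\<bar>\<dots>\<bar> \<le> (1 - l) * \<bar>v k\<bar> + l * \<bar>v (k+1)\<bar>"
    using l abs_triangle_ineq[of "(1 - l) * v k" "l * v (k+1)"] by (simp add: abs_mult)
  also have "\<dots> \<le> \<bar>v k\<bar> + \<bar>v (k+1)\<bar>"
    using l mult_left_le_one_le[of "\<bar>v k\<bar>" "1 - l"] mult_left_le_one_le[of "\<bar>v (k+1)\<bar>" l] by simp
  also have "\<dots> \<le> 2 * (\<Sum>i\<in>{0..int N}. \<bar>v i\<bar>)"
  proof -
    have "\<bar>v k\<bar> \<le> (\<Sum>i\<in>{0..int N}. \<bar>v i\<bar>)" using k by (intro member_le_sum) auto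
    moreover have "\<bar>v (k+1)\<bar> \<le> (\<Sum>i\<in>{0..int N}. \<bar>v i\<bar>)" using k by (intro member_le_sum) auto
    ultimately show ?thesis by simp
  qed
  finally show ?thesis .
qed

lemma event_grid:
  assumes N: "N \<ge> 1" and g: "continuous_on {0..1} g"
    and ev: "sup_norm01 (\<lambda>t. hN N phi t - g t) < \<delta>" and j: "j \<in> {0..int N}"
  shows "\<bar>phi j / (real N)^2 - g (real_of_int j / real N)\<bar> < \<delta>"
proof -
  have "compact (g ` {0..1})" by (rule compact_continuous_image[OF g]) simp
  then obtain B where B: "\<And>t. t \<in> {0..1} \<Longrightarrow> \<bar>g t\<bar> \<le> B"
    by (metis compact_imp_bounded bounded_real image_eqI)
  define V where "V = 2 * (\<Sum>i\<in>{0..int N}. \<bar>phi i / (real N)^2\<bar>)"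
  have bdd: "bdd_above ((\<lambda>t. \<bar>hN N phi t - g t\<bar>) ` {0..1})"
  proof (rule bdd_aboveI2)
    fix t :: real assume t: "t \<in> {0..1}"
    have "\<bar>hN N phi t\<bar> \<le> V" unfolding hN_def V_def by (rule lin_interp_bound[OF N t])
    then show "\<bar>hN N phi t - g t\<bar> \<le> V + B" using B[OF t] by linarith
  qed
  have jt: "real_of_int j / real N \<in> {0..1}" using j N by auto
  have "\<bar>hN N phi (real_of_int j / real N) - g (real_of_int j / real N)\<bar> \<le> sup_norm01 (\<lambda>t. hN N phi t - g t)"
    unfolding sup_norm01_def by (rule cSUP_upper[OF jt bdd])
  moreover have "hN N phi (real_of_int j / real N) = phi j / (real N)^2"
    unfolding hN_def by (rule lin_interp_grid[OF N j])
  ultimately show ?thesis using ev by simp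
qed

lemma cont_coord: "continuous_on S (\<lambda>x::int \<Rightarrow> real. x i)"
  by (rule continuous_on_subset[OF continuous_on_product_coordinates]) simp

lemma cont_ham: "continuous_on S (\<lambda>phi. hamiltonian N phi)"
  unfolding hamiltonian_def
  apply (rule continuous_on_sum)
  apply (rule continuous_on_mult)
   apply (rule continuous_on_const)
  apply (rule continuous_on_power)
  apply (rule continuous_on_diff)
   apply (rule continuous_on_add)
    apply (rule cont_coord)
   apply (rule cont_coord)
  apply (rule continuous_on_mult)
   apply (rule continuous_on_const)
  apply (rule cont_coord)
  done

lemma compact_box:
  fixes F :: "int set" and a b :: "int \<Rightarrow> real" and C :: "int set" and lo hi :: "int \<Rightarrow> real"
  shows "compact ({phi. (\<forall>k. k \<notin> F \<longrightarrow> phi k = 0) \<and> (\<forall>k\<in>F. phi k \<in> {a k..b k})}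
     \<inter> (\<Inter>j\<in>C. {phi. lo j \<le> phi j \<and> phi j \<le> hi j}))"
proof (rule compact_Int_closed)
  define B where "B k = (if k \<in> F then {a k..b k} else {0::real})" for k
  have eq: "{phi. (\<forall>k. k \<notin> F \<longrightarrow> phi k = 0) \<and> (\<forall>k\<in>F. phi k \<in> {a k..b k})} = PiE UNIV B"
  proof -
    have *: "phi k \<in> B k \<longleftrightarrow> (k \<notin> F \<longrightarrow> phi k = 0) \<and> (k \<in> F \<longrightarrow> phi k \<in> {a k..b k})" for phi :: "int \<Rightarrow> real" and k
      by (simp add: B_def)
    have **: "phi \<in> PiE UNIV B \<longleftrightarrow> (\<forall>k. phi k \<in> B k)" for phi :: "int \<Rightarrow> real"
      by (simp add: PiE_iff)
    show ?thesis by (rule set_eqI) (simp only: ** * mem_Collect_eq, blast)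
  qed
  have "compactin (product_topology (\<lambda>_. euclidean) UNIV) (PiE UNIV B)"
    by (subst compactin_PiE) (auto simp: B_def)
  then show "compact {phi. (\<forall>k. k \<notin> F \<longrightarrow> phi k = 0) \<and> (\<forall>k\<in>F. phi k \<in> {a k..b k})}"
    unfolding eq euclidean_product_topology compactin_euclidean_iff .
  show "closed (\<Inter>j\<in>C. {phi::int\<Rightarrow>real. lo j \<le> phi j \<and> phi j \<le> hi j})"
  proof (intro closed_INT ballI)
    fix j
    have "{phi::int\<Rightarrow>real. lo j \<le> phi j \<and> phi j \<le> hi j} = {phi. lo j \<le> phi j} \<inter> {phi. phi j \<le> hi j}" by auto
    moreover have "closed {phi::int\<Rightarrow>real. lo j \<le> phi j}"
      by (intro closed_Collect_le continuous_on_const cont_coord)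
    moreover have "closed {phi::int\<Rightarrow>real. phi j \<le> hi j}"
      by (intro closed_Collect_le continuous_on_const cont_coord)
    ultimately show "closed {phi::int\<Rightarrow>real. lo j \<le> phi j \<and> phi j \<le> hi j}" by auto
  qed
qed

lemma ennreal_ratio_le:
  fixes a b k :: ennreal
  assumes "a \<le> k * b"
  shows "a / b \<le> k"
proof (cases "b = 0")
  case True
  then show ?thesis using assms by simp
next
  case False
  show ?thesis
  proof (cases "b = top")
    case True then show ?thesis by simp
  next
    case False
    with \<open>b \<noteq> 0\<close> show ?thesis using assms
      using divide_right_mono_ennreal[OF assms, of b] ennreal_mult_divide_eq[of b k] by simp
  qed
qed



lemma energy_scaled:
  assumes "N \<ge> 1"
  shows "real N * energy_N N (\<lambda>j. c j / (real N)^2) = hamiltonian N c"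
proof -
  define n where "n = real N"
  have n: "n > 0" using assms by (simp add: n_def)
  have t: "(1 / n) * n^4 * (c (j+1) / n^2 + c (j-1) / n^2 - 2 * (c j / n^2))^2
      = (1/n) * (c (j+1) + c (j-1) - 2 * c j)^2" for j
  proof -
    define y where "y = c (j+1) + c (j-1) - 2 * c j"
    have "c (j+1) / n^2 + c (j-1) / n^2 - 2 * (c j / n^2) = y / n^2"
      unfolding y_def by (simp add: diff_divide_distrib add_divide_distrib)
    moreover have "(y / n^2)^2 = y^2 / n^4" by (simp add: power_divide power_mult[symmetric])
    moreover have "n^4 * (y^2 / n^4) = y^2" using n by simp
    ultimately show ?thesis unfolding y_def[symmetric] by simp
  qed
  have "energy_N N (\<lambda>j. c j / (real N)^2) = (1/2) * (\<Sum>j\<in>{0..int N}. (1 / n) * (c (j+1) + c (j-1) - 2 * c j)^2)"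
    unfolding energy_N_def n_def[symmetric] by (simp only: t)
  also have "\<dots> = (1/n) * hamiltonian N c"
    by (simp add: hamiltonian_def sum_distrib_left mult.commute mult.left_commute)
  finally show ?thesis using n by (simp add: n_def)
qed

lemma ext_meas [measurable]:
  "(\<lambda>x. extend_zero N P x k) \<in> borel_measurable (PiM (free_sites N P) (\<lambda>_. lborel))"
proof (cases "k \<in> free_sites N P")
  case True
  then show ?thesis unfolding extend_zero_def by simp
next
  case False
  then show ?thesis unfolding extend_zero_def by simp
qed

lemma ham_ext_meas [measurable]:
  "(\<lambda>x. hamiltonian N (extend_zero N P x)) \<in> borel_measurable (PiM (free_sites N P) (\<lambda>_. lborel))"
  unfolding hamiltonian_def by measurable

lemma abs_div_iff:
  fixes y a d n2 :: real
  assumes "n2 > 0"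
  shows "\<bar>y / n2 - a\<bar> \<le> d \<longleftrightarrow> n2 * (a - d) \<le> y \<and> y \<le> n2 * (a + d)"
proof -
  have "\<bar>y / n2 - a\<bar> \<le> d \<longleftrightarrow> a - d \<le> y / n2 \<and> y / n2 \<le> a + d" by (auto simp: abs_le_iff)
  also have "\<dots> \<longleftrightarrow> n2 * (a - d) \<le> y \<and> y \<le> n2 * (a + d)"
    using assms by (simp add: pos_le_divide_eq pos_divide_le_eq mult.commute)
  finally show ?thesis .
qed

lemma convex_interval_aux:
  fixes lo hi a b t :: real
  assumes "lo \<le> a" "a \<le> hi" "lo \<le> b" "b \<le> hi" "0 \<le> t" "t \<le> 1"
  shows "lo \<le> a + t * (b - a) \<and> a + t * (b - a) \<le> hi"
proof -
  have "(1-t)*(a-lo) \<ge> 0" "t*(b-lo) \<ge> 0" "(1-t)*(hi-a) \<ge> 0" "t*(hi-b) \<ge> 0"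
    using assms by simp_all
  moreover have "a + t*(b-a) - lo = (1-t)*(a-lo) + t*(b-lo)" "hi - (a + t*(b-a)) = (1-t)*(hi-a) + t*(hi-b)"
    by (simp_all add: algebra_simps)
  ultimately show ?thesis by linarith
qed

theorem lemma3p12:
  fixes \<delta> :: real
  assumes "\<delta> > 0"
  shows "\<exists>N0::nat. \<forall>N\<ge>N0. \<forall>P::int set. \<forall>g::real \<Rightarrow> real.
           P \<subseteq> {1..int N - 1} \<longrightarrow> continuous_on {0..1} g \<longrightarrow>
           gamma_prob N P (\<lambda>phi. sup_norm01 (\<lambda>t. hN N phi t - g t) < \<delta>)
             \<le> ennreal (exp (- real N *
                  (INF h\<in>{h::int \<Rightarrow> real. \<forall>j\<in>{0..int N}.
                            \<bar>h j - g (real_of_int j / real N)\<bar> \<le> 2 * \<delta>}.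
                     energy_N N h)))"
proof (intro exI[of _ 1] allI impI)
  fix N :: nat and P :: "int set" and g :: "real \<Rightarrow> real"
  assume N: "1 \<le> N" and g: "continuous_on {0..1} g"
  define F where "F = free_sites N P"
  define M where "M = PiM F (\<lambda>_. lborel::real measure)"
  define ext where "ext = extend_zero N P"
  define ev where "ev = (\<lambda>phi. sup_norm01 (\<lambda>t. hN N phi t - g t) < \<delta>)"
  define T where "T = {h::int \<Rightarrow> real. \<forall>j\<in>{0..int N}. \<bar>h j - g (real_of_int j / real N)\<bar> \<le> 2 * \<delta>}"
  define S where "S = {phi::int\<Rightarrow>real. (\<forall>k. k \<notin> F \<longrightarrow> phi k = 0) \<and>
     (\<forall>j\<in>{0..int N}. \<bar>phi j / (real N)^2 - g (real_of_int j / real N)\<bar> \<le> \<delta>)}"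
  define Z where "Z = (\<integral>\<^sup>+ x. ennreal (exp (- hamiltonian N (ext x))) \<partial>M)"
  define num where "num = (\<integral>\<^sup>+ x. indicator {x. ev (ext x)} x * ennreal (exp (- hamiltonian N (ext x))) \<partial>M)"
  have gp: "gamma_prob N P ev = num / Z"
    unfolding gamma_prob_def num_def Z_def M_def F_def ext_def ..
  have finF: "finite F" unfolding F_def free_sites_def by simp
  have Npos: "real N > 0" using N by simp
  have ext_zero: "ext x k = 0" if "k \<notin> F" for x k
    using that unfolding ext_def extend_zero_def F_def by simp
  have ext_S: "ext x \<in> S" if "ev (ext x)" for x
    unfolding S_def using ext_zero event_grid[OF N g that[unfolded ev_def]] by (auto intro!: less_imp_le)
  show "gamma_prob N P (\<lambda>phi. sup_norm01 (\<lambda>t. hN N phi t - g t) < \<delta>)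
        \<le> ennreal (exp (- real N * (INF h\<in>T. energy_N N h)))"
    unfolding ev_def[symmetric] T_def[symmetric] gp
  proof (cases "S = {}")
    case True
    have "num \<le> (\<integral>\<^sup>+ x. 0 \<partial>M)"
      unfolding num_def using True ext_S by (intro nn_integral_mono) (auto simp: indicator_def)
    then have "num = 0" by simp
    then show "num / Z \<le> ennreal (exp (- real N * (INF h\<in>T. energy_N N h)))" by simp
  next
    case False
    define n2 where "n2 = (real N)^2"
    have n2: "n2 > 0" using Npos by (simp add: n2_def)
    define lo where "lo j = n2 * (g (real_of_int j / real N) - \<delta>)" for j
    define hi where "hi j = n2 * (g (real_of_int j / real N) + \<delta>)" for j
    have FN: "F \<subseteq> {0..int N}" unfolding F_def free_sites_def by auto
    have Seq: "S = {phi. (\<forall>k. k \<notin> F \<longrightarrow> phi k = 0) \<and> (\<forall>k\<in>F. phi k \<in> {lo k..hi k})}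
     \<inter> (\<Inter>j\<in>{0..int N}. {phi. lo j \<le> phi j \<and> phi j \<le> hi j})"
      unfolding S_def lo_def hi_def abs_div_iff[OF n2, unfolded n2_def] n2_def using FN by auto
    have "compact S" unfolding Seq by (rule compact_box)
    moreover have "continuous_on S (\<lambda>phi. hamiltonian N phi)" by (rule cont_ham)
    ultimately obtain c where cS: "c \<in> S" and cmin: "\<And>psi. psi \<in> S \<Longrightarrow> hamiltonian N c \<le> hamiltonian N psi"
      using continuous_attains_inf[of S "\<lambda>phi. hamiltonian N phi"] False by blast
    have conv: "(\<lambda>k. c k + t * (phi k - c k)) \<in> S" if "phi \<in> S" "0 \<le> t" "t \<le> 1" for phi t
      using cS that convex_interval_aux[of "lo _" "c _" "hi _" "phi _" t]
      unfolding Seq by auto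
    have key: "hamiltonian N phi \<ge> hamiltonian N c + hamiltonian N (\<lambda>k. phi k - c k)" if "phi \<in> S" for phi
      by (rule minimizer_ineq[OF cS that conv cmin]) (use that in auto)
    define sh where "sh = (\<lambda>x::int\<Rightarrow>real. \<lambda>i\<in>F. x i - c i)"
    have ext_sh: "(\<lambda>k. ext x k - c k) = ext (sh x)" if "x \<in> space M" for x
    proof
      fix k show "ext x k - c k = ext (sh x) k"
      proof (cases "k \<in> F")
        case True then show ?thesis unfolding ext_def extend_zero_def sh_def F_def by simp
      next
        case False then show ?thesis using cS ext_zero unfolding S_def by simp
      qed
    qed
    have "num \<le> (\<integral>\<^sup>+ x. ennreal (exp (- hamiltonian N c)) * ennreal (exp (- hamiltonian N (ext (sh x)))) \<partial>M)"
      unfolding num_def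
    proof (intro nn_integral_mono)
      fix x assume x: "x \<in> space M"
      show "indicator {x. ev (ext x)} x * ennreal (exp (- hamiltonian N (ext x)))
            \<le> ennreal (exp (- hamiltonian N c)) * ennreal (exp (- hamiltonian N (ext (sh x))))"
      proof (cases "ev (ext x)")
        case True
        have "hamiltonian N (ext x) \<ge> hamiltonian N c + hamiltonian N (ext (sh x))"
          using key[OF ext_S[OF True]] ext_sh[OF x] by simp
        then have "exp (- hamiltonian N (ext x)) \<le> exp (- hamiltonian N c) * exp (- hamiltonian N (ext (sh x)))"
          by (simp add: exp_add[symmetric])
        then show ?thesis using True by (simp add: ennreal_mult[symmetric] ennreal_leI)
      qed simp
    qed
    also have "\<dots> = ennreal (exp (- hamiltonian N c)) * (\<integral>\<^sup>+ x. ennreal (exp (- hamiltonian N (ext (sh x)))) \<partial>M)"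
    proof (rule nn_integral_cmult)
      have shm: "sh \<in> measurable M M" unfolding sh_def M_def by measurable
      have fm: "(\<lambda>x. ennreal (exp (- hamiltonian N (ext x)))) \<in> borel_measurable M"
        unfolding ext_def M_def F_def by measurable
      show "(\<lambda>x. ennreal (exp (- hamiltonian N (ext (sh x))))) \<in> borel_measurable M"
        using measurable_compose[OF shm fm] by (simp add: comp_def)
    qed
    also have "(\<integral>\<^sup>+ x. ennreal (exp (- hamiltonian N (ext (sh x)))) \<partial>M) = Z"
      unfolding Z_def M_def sh_def
      by (rule nn_integral_PiM_shift[OF finF, of "\<lambda>x. ennreal (exp (- hamiltonian N (ext x)))"])
         (unfold ext_def F_def, measurable)
    finally have "num / Z \<le> ennreal (exp (- hamiltonian N c))" by (rule ennreal_ratio_le)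
    also have "\<dots> \<le> ennreal (exp (- real N * (INF h\<in>T. energy_N N h)))"
    proof -
      have cT: "(\<lambda>j. c j / (real N)^2) \<in> T"
        using cS \<open>\<delta> > 0\<close> unfolding S_def T_def by force
      have "(INF h\<in>T. energy_N N h) \<le> energy_N N (\<lambda>j. c j / (real N)^2)"
      proof (rule cINF_lower[OF _ cT])
        show "bdd_below (energy_N N ` T)"
        proof (rule bdd_belowI2)
          fix h show "0 \<le> energy_N N h" unfolding energy_N_def by (intro mult_nonneg_nonneg sum_nonneg) auto
        qed
      qed
      then have "real N * (INF h\<in>T. energy_N N h) \<le> hamiltonian N c"
        using energy_scaled[OF N, of c] Npos by (metis mult_left_mono less_imp_le)
      then show ?thesis by (intro ennreal_leI) simp
    qed
    finally show "num / Z \<le> ennreal (exp (- real N * (INF h\<in>T. energy_N N h)))" .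
  qed
qed


end
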